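(* The Galois structure $\Gamma_C=(\mathsf{PreOrdGrp},\mathsf{PreOrdAb},C,V,\mathscr{E}_C,\mathscr{Z}_C)$ is admissible; that is, for every preordered group $B$, every preordered abelian group $X$ and every regular epimorphism $\phi\colon X\to C(B)$ in $\mathsf{PreOrdAb}$, the functor $C$ sends the pullback in $\mathsf{PreOrdGrp}$ of $V(\phi)$ along the unit $\eta_B\colon B\to VC(B)$ to a pullback in $\mathsf{PreOrdAb}$.
   Context: A preordered group is a pair $(G,P_G)$ where $G$ is a group (additively written) and $P_G\subseteq G$ a submonoid closed under conjugation; morphisms are group homomorphisms $f$ with $f(P_G)\subseteq P_H$. This is $\mathsf{PreOrdGrp}$; $\mathsf{PreOrdAb}$ is the full subcategory with $G$ abelian, $V$ the inclusion. $C$ is the left adjoint of $V$: $C(G,P_G)=(G/[G,G],\eta_G(P_G))$ with $\eta_G$ the abelianization quotient, unit $(\eta_G,\eta_G|_{P_G})$; the counit is an isomorphism. Limits in $\mathsf{PreOrdGrp}$ are computed componentwise. $\mathscr{E}_C$ (resp. $\mathscr{Z}_C$) is the class of regular epimorphisms of $\mathsf{PreOrdGrp}$ (resp. $\mathsf{PreOrdAb}$), namely morphisms $(f,\bar f)$ with both $f$ and $\bar f$ surjective. In general, a Galois structure $(\mathscr C,\mathscr F,F,U,\mathscr E,\mathscr Z)$ (adjunction $F\dashv U$ with classes of morphisms $\mathscr E$, $\mathscr Z$ stable under pullback and composition, containing isomorphisms, with $F(\mathscr E)\subseteq\mathscr Z$, $U(\mathscr Z)\subseteq\mathscr E$) is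 admissible when, for each $B$, the counit of the induced adjunction between extensions of $B$ in $\mathscr E$ and extensions of $F(B)$ in $\mathscr Z$ (left adjoint $F$, right adjoint pulling back $U(\phi)$ along the unit $\eta_B$) is an isomorphism; when the counit of $F\dashv U$ is an isomorphism, this is equivalent to the pullback-preservation condition stated in the claim. *)

theory Defs
  imports "HOL-Algebra.Algebra"
begin

definition preord_group :: "('a, 'm) monoid_scheme \<Rightarrow> 'a set \<Rightarrow> bool" where
  "preord_group G P \<longleftrightarrow> group G \<and> P \<subseteq> carrier G \<and> \<one>\<^bsub>G\<^esub> \<in> P
     \<and> (\<forall>x\<in>P. \<forall>y\<in>P. x \<otimes>\<^bsub>G\<^esub> y \<in> P)
     \<and> (\<forall>g\<in>carrier G. \<forall>x\<in>P. g \<otimes>\<^bsub>G\<^esub> x \<otimes>\<^bsub>G\<^esub> inv\<^bsub>G\<^esub> g \<in> P)"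

definition preord_ab :: "('a, 'm) monoid_scheme \<Rightarrow> 'a set \<Rightarrow> bool" where
  "preord_ab G P \<longleftrightarrow> preord_group G P \<and> comm_group G"

definition preord_hom :: "('a, 'm) monoid_scheme \<Rightarrow> 'a set \<Rightarrow> ('b, 'n) monoid_scheme \<Rightarrow> 'b set
    \<Rightarrow> ('a \<Rightarrow> 'b) \<Rightarrow> bool" where
  "preord_hom G P H Q f \<longleftrightarrow> f \<in> hom G H \<and> f ` P \<subseteq> Q"

definition preord_regepi :: "('a, 'm) monoid_scheme \<Rightarrow> 'a set \<Rightarrow> ('b, 'n) monoid_scheme \<Rightarrow> 'b set
    \<Rightarrow> ('a \<Rightarrow> 'b) \<Rightarrow> bool" where
  "preord_regepi G P H Q f \<longleftrightarrow> preord_hom G P H Q f \<and> f ` carrier G = carrier H \<and> f ` P = Q"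

definition abel :: "('a, 'm) monoid_scheme \<Rightarrow> 'a set monoid" where
  "abel G = G Mod (derived G (carrier G))"

definition eta :: "('a, 'm) monoid_scheme \<Rightarrow> 'a \<Rightarrow> 'a set" where
  "eta G x = derived G (carrier G) #>\<^bsub>G\<^esub> x"

definition abel_cone :: "('a, 'm) monoid_scheme \<Rightarrow> 'a set \<Rightarrow> 'a set set" where
  "abel_cone G P = eta G ` P"

definition abel_map :: "('a, 'm) monoid_scheme \<Rightarrow> ('b, 'n) monoid_scheme \<Rightarrow> ('a \<Rightarrow> 'b)
    \<Rightarrow> 'a set \<Rightarrow> 'b set" where
  "abel_map G H f K = eta H (f (SOME x. x \<in> K))"

definition pb_group :: "('a, 'm) monoid_scheme \<Rightarrow> ('b, 'n) monoid_scheme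
    \<Rightarrow> ('a \<Rightarrow> 'c) \<Rightarrow> ('b \<Rightarrow> 'c) \<Rightarrow> ('a \<times> 'b) monoid" where
  "pb_group A B f g =
     \<lparr> carrier = {(a, b). a \<in> carrier A \<and> b \<in> carrier B \<and> f a = g b},
       monoid.mult = (\<lambda>x y. (fst x \<otimes>\<^bsub>A\<^esub> fst y, snd x \<otimes>\<^bsub>B\<^esub> snd y)),
       one = (\<one>\<^bsub>A\<^esub>, \<one>\<^bsub>B\<^esub>) \<rparr>"

definition pb_cone :: "('a, 'm) monoid_scheme \<Rightarrow> 'a set \<Rightarrow> ('b, 'n) monoid_scheme \<Rightarrow> 'b set
    \<Rightarrow> ('a \<Rightarrow> 'c) \<Rightarrow> ('b \<Rightarrow> 'c) \<Rightarrow> ('a \<times> 'b) set" where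
  "pb_cone A PA B PB f g = {(a, b). a \<in> PA \<and> b \<in> PB} \<inter> carrier (pb_group A B f g)"

text \<open>A commutative square of preordered groups
     D --p--> A
     |q       |f
     B --g--> C
  is a pullback (limits being computed componentwise) iff the comparison map
  d \<mapsto> (p d, q d) into the componentwise pullback is an isomorphism of preordered groups.\<close>
definition is_pullback_square ::
  "('d, 'k) monoid_scheme \<Rightarrow> 'd set \<Rightarrow> ('a, 'm) monoid_scheme \<Rightarrow> 'a set
   \<Rightarrow> ('b, 'n) monoid_scheme \<Rightarrow> 'b set \<Rightarrow> ('c, 'l) monoid_scheme
   \<Rightarrow> ('d \<Rightarrow> 'a) \<Rightarrow> ('d \<Rightarrow> 'b) \<Rightarrow> ('a \<Rightarrow> 'c) \<Rightarrow> ('b \<Rightarrow> 'c) \<Rightarrow> bool" where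
  "is_pullback_square D PD A PA B PB Cg p q f g \<longleftrightarrow>
     (\<forall>d\<in>carrier D. f (p d) = g (q d))
     \<and> (\<lambda>d. (p d, q d)) \<in> hom D (pb_group A B f g)
     \<and> bij_betw (\<lambda>d. (p d, q d)) (carrier D) (carrier (pb_group A B f g))
     \<and> (\<lambda>d. (p d, q d)) ` PD = pb_cone A PA B PB f g"

end

theory Submission imports Defs begin

lemma eta_hom: assumes "group G" shows "eta G \<in> hom G (abel G)"
proof -
  interpret normal "derived G (carrier G)" G using group.derived_self_is_normal[OF assms] .
  show ?thesis unfolding eta_def[abs_def] abel_def by (rule r_coset_hom_Mod)
qed

lemma abel_comm: assumes "group G" shows "comm_group (abel G)"
  unfolding abel_def using group.derived_quot_is_comm_group[OF assms] .

lemma abel_group: assumes "group G" shows "group (abel G)"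
  using abel_comm[OF assms] by (simp add: comm_group_def)

lemma abel_carrier: assumes "group G" "M \<in> carrier (abel G)" shows "\<exists>m\<in>carrier G. M = eta G m"
  using assms(2) unfolding abel_def eta_def FactGroup_def RCOSETS_def by auto

lemma eta_comm: assumes "comm_group G" "x \<in> carrier G" shows "eta G x = {x}"
proof -
  interpret comm_group G by fact
  show ?thesis unfolding eta_def using derived_eq_singleton[of "carrier G"] assms(2)
    by (simp add: r_coset_def)
qed

lemma eta_mem: assumes "group G" "x \<in> carrier G" shows "x \<in> eta G x"
proof -
  interpret group G by fact
  show ?thesis unfolding eta_def using rcos_self[OF assms(2) derived_is_subgroup[of "carrier G"]] by simp
qed

lemma eta_eqD: assumes "group G" "x \<in> carrier G" "y \<in> carrier G" "eta G x = eta G y"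
  shows "\<exists>k\<in>derived G (carrier G). x = k \<otimes>\<^bsub>G\<^esub> y"
  using eta_mem[OF assms(1,2)] assms(4) unfolding eta_def r_coset_def by auto

lemma eta_absorb: assumes "group G" "k \<in> derived G (carrier G)" "y \<in> carrier G"
  shows "eta G (k \<otimes>\<^bsub>G\<^esub> y) = eta G y"
proof -
  interpret group G by fact
  have sg: "subgroup (derived G (carrier G)) G" by (rule derived_is_subgroup) simp
  have kc: "k \<in> carrier G" using subgroup.mem_carrier[OF sg assms(2)] .
  have "derived G (carrier G) #>\<^bsub>G\<^esub> (k \<otimes>\<^bsub>G\<^esub> y) = (derived G (carrier G) #>\<^bsub>G\<^esub> k) #>\<^bsub>G\<^esub> y"
    using coset_mult_assoc[OF subgroup.subset[OF sg] kc assms(3)] by simp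
  also have "\<dots> = derived G (carrier G) #>\<^bsub>G\<^esub> y" using coset_join2[OF kc sg assms(2)] by simp
  finally show ?thesis unfolding eta_def .
qed

lemma abel_map_eta:
  assumes "group G" "group H" "h \<in> hom G H" "m \<in> carrier G"
  shows "abel_map G H h (eta G m) = eta H (h m)"
proof -
  interpret gh: group_hom G H h using assms by (simp add: group_hom_def group_hom_axioms_def)
  define x where "x = (SOME x. x \<in> eta G m)"
  have "x \<in> eta G m" unfolding x_def using eta_mem[OF assms(1,4)] by (rule someI)
  then obtain k where k: "k \<in> derived G (carrier G)" "x = k \<otimes>\<^bsub>G\<^esub> m"
    unfolding eta_def r_coset_def by auto
  have kc: "k \<in> carrier G" using k(1) gh.G.derived_in_carrier[of "carrier G"] by auto
  have "h k \<in> h ` derived G (carrier G)" using k by blast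
  also have "\<dots> = derived H (h ` carrier G)" using gh.derived_img by simp
  also have "\<dots> \<subseteq> derived H (carrier H)" by (rule gh.H.mono_derived) auto
  finally have hk: "h k \<in> derived H (carrier H)" .
  have "abel_map G H h (eta G m) = eta H (h x)" unfolding abel_map_def x_def ..
  also have "\<dots> = eta H (h k \<otimes>\<^bsub>H\<^esub> h m)" using k kc assms(4) by simp
  also have "\<dots> = eta H (h m)" using eta_absorb[OF assms(2) hk] assms(4) by simp
  finally show ?thesis .
qed


theorem corollary2p6:
  fixes B :: "('b, 'm) monoid_scheme" and PB :: "'b set"
    and Y :: "('x, 'n) monoid_scheme" and PY :: "'x set"
    and \<phi> :: "'x \<Rightarrow> 'b set"
  assumes "preord_group B PB"
    and "preord_ab Y PY"
    and "preord_regepi Y PY (abel B) (abel_cone B PB) \<phi>"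
  shows "is_pullback_square
           (abel (pb_group B Y (eta B) \<phi>)) (abel_cone (pb_group B Y (eta B) \<phi>) (pb_cone B PB Y PY (eta B) \<phi>))
           (abel B) (abel_cone B PB)
           (abel Y) (abel_cone Y PY)
           (abel (abel B))
           (abel_map (pb_group B Y (eta B) \<phi>) B fst)
           (abel_map (pb_group B Y (eta B) \<phi>) Y snd)
           (abel_map B (abel B) (eta B))
           (abel_map Y (abel B) \<phi>)"
proof -
  define D where "D = pb_group B Y (eta B) \<phi>"
  define PD where "PD = pb_cone B PB Y PY (eta B) \<phi>"
  define p where "p = abel_map D B fst"
  define q where "q = abel_map D Y snd"
  define f where "f = abel_map B (abel B) (eta B)"
  define g where "g = abel_map Y (abel B) \<phi>"
  define P where "P = pb_group (abel B) (abel Y) f g"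
  have gB: "group B" using assms(1) unfolding preord_group_def by simp
  have cY: "comm_group Y" using assms(2) unfolding preord_ab_def by simp
  have gY: "group Y" using cY by (simp add: comm_group_def)
  have PBc: "PB \<subseteq> carrier B" using assms(1) unfolding preord_group_def by simp
  have PYc: "PY \<subseteq> carrier Y" using assms(2) unfolding preord_ab_def preord_group_def by simp
  have gA: "group (abel B)" by (rule abel_group[OF gB])
  have cA: "comm_group (abel B)" by (rule abel_comm[OF gB])
  have gAY: "group (abel Y)" by (rule abel_group[OF gY])
  have heta: "eta B \<in> hom B (abel B)" by (rule eta_hom[OF gB])
  have hphi: "\<phi> \<in> hom Y (abel B)" using assms(3) unfolding preord_regepi_def preord_hom_def by simp
  have sphi: "\<phi> ` carrier Y = carrier (abel B)" using assms(3) unfolding preord_regepi_def by simp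
  interpret ghe: group_hom B "abel B" "eta B" using gB gA heta by (simp add: group_hom_def group_hom_axioms_def)
  interpret ghp: group_hom Y "abel B" \<phi> using gY gA hphi by (simp add: group_hom_def group_hom_axioms_def)
  have carD: "carrier D = {(a, b). a \<in> carrier B \<and> b \<in> carrier Y \<and> eta B a = \<phi> b}"
    unfolding D_def pb_group_def by simp
  have multD: "\<And>x y. x \<otimes>\<^bsub>D\<^esub> y = (fst x \<otimes>\<^bsub>B\<^esub> fst y, snd x \<otimes>\<^bsub>Y\<^esub> snd y)"
    unfolding D_def pb_group_def by simp
  have oneD: "\<one>\<^bsub>D\<^esub> = (\<one>\<^bsub>B\<^esub>, \<one>\<^bsub>Y\<^esub>)" unfolding D_def pb_group_def by simp
  have gD: "group D"
  proof (rule groupI)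
    show "\<And>x y. x \<in> carrier D \<Longrightarrow> y \<in> carrier D \<Longrightarrow> x \<otimes>\<^bsub>D\<^esub> y \<in> carrier D"
      unfolding carD multD by auto
    show "\<one>\<^bsub>D\<^esub> \<in> carrier D" unfolding carD oneD by auto
    show "\<And>x y z. x \<in> carrier D \<Longrightarrow> y \<in> carrier D \<Longrightarrow> z \<in> carrier D \<Longrightarrow>
        x \<otimes>\<^bsub>D\<^esub> y \<otimes>\<^bsub>D\<^esub> z = x \<otimes>\<^bsub>D\<^esub> (y \<otimes>\<^bsub>D\<^esub> z)"
      unfolding carD multD by (auto simp: ghe.G.m_assoc ghp.G.m_assoc)
    show "\<And>x. x \<in> carrier D \<Longrightarrow> \<one>\<^bsub>D\<^esub> \<otimes>\<^bsub>D\<^esub> x = x"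
      unfolding carD multD oneD by auto
    show "\<exists>y\<in>carrier D. y \<otimes>\<^bsub>D\<^esub> x = \<one>\<^bsub>D\<^esub>" if "x \<in> carrier D" for x
    proof (intro bexI)
      show "(inv\<^bsub>B\<^esub> fst x, inv\<^bsub>Y\<^esub> snd x) \<otimes>\<^bsub>D\<^esub> x = \<one>\<^bsub>D\<^esub>"
        using that unfolding carD multD oneD by auto
      show "(inv\<^bsub>B\<^esub> fst x, inv\<^bsub>Y\<^esub> snd x) \<in> carrier D"
        using that unfolding carD by (auto simp: ghe.hom_inv ghp.hom_inv)
    qed
  qed
  have hfst: "fst \<in> hom D B" unfolding hom_def carD multD by auto
  have hsnd: "snd \<in> hom D Y" unfolding hom_def carD multD by auto
  interpret ghf: group_hom D B fst using gD gB hfst by (simp add: group_hom_def group_hom_axioms_def)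
  interpret ghs: group_hom D Y snd using gD gY hsnd by (simp add: group_hom_def group_hom_axioms_def)
  have hetaD: "eta D \<in> hom D (abel D)" by (rule eta_hom[OF gD])
  have pD: "\<And>d. d \<in> carrier D \<Longrightarrow> p (eta D d) = eta B (fst d)"
    unfolding p_def using abel_map_eta[OF gD gB hfst] by simp
  have qD: "\<And>d. d \<in> carrier D \<Longrightarrow> q (eta D d) = {snd d}"
    unfolding q_def using abel_map_eta[OF gD gY hsnd] eta_comm[OF cY] ghs.hom_closed by simp
  have fB: "\<And>b. b \<in> carrier B \<Longrightarrow> f (eta B b) = {eta B b}"
    unfolding f_def using abel_map_eta[OF gB gA heta] eta_comm[OF cA] by simp
  have gYs: "\<And>y. y \<in> carrier Y \<Longrightarrow> g {y} = {\<phi> y}"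
  proof -
    fix y assume y: "y \<in> carrier Y"
    have "g {y} = g (eta Y y)" using eta_comm[OF cY y] by simp
    also have "\<dots> = eta (abel B) (\<phi> y)" unfolding g_def using abel_map_eta[OF gY gA hphi y] .
    also have "\<dots> = {\<phi> y}" using eta_comm[OF cA] ghp.hom_closed[OF y] by simp
    finally show "g {y} = {\<phi> y}" .
  qed
  have carA: "\<And>K. K \<in> carrier (abel B) \<Longrightarrow> \<exists>b\<in>carrier B. K = eta B b"
    using abel_carrier[OF gB] by blast
  have carAY: "\<And>L. L \<in> carrier (abel Y) \<Longrightarrow> \<exists>y\<in>carrier Y. L = {y}"
    using abel_carrier[OF gY] eta_comm[OF cY] by metis
  have carAD: "\<And>M. M \<in> carrier (abel D) \<Longrightarrow> \<exists>d\<in>carrier D. M = eta D d"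
    using abel_carrier[OF gD] by blast
  have carP: "carrier P = {(K, L). K \<in> carrier (abel B) \<and> L \<in> carrier (abel Y) \<and> f K = g L}"
    unfolding P_def pb_group_def by simp
  have multP: "\<And>x y. x \<otimes>\<^bsub>P\<^esub> y = (fst x \<otimes>\<^bsub>abel B\<^esub> fst y, snd x \<otimes>\<^bsub>abel Y\<^esub> snd y)"
    unfolding P_def pb_group_def by simp
  have etaY: "\<And>y. y \<in> carrier Y \<Longrightarrow> eta Y y = {y}" using eta_comm[OF cY] by simp
  have etaYc: "\<And>y. y \<in> carrier Y \<Longrightarrow> {y} \<in> carrier (abel Y)"
    using etaY eta_hom[OF gY] unfolding hom_def Pi_def by force
  have PhiD: "\<And>d. d \<in> carrier D \<Longrightarrow> (p (eta D d), q (eta D d)) \<in> carrier P"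
  proof -
    fix d assume d: "d \<in> carrier D"
    then obtain a y where dd: "d = (a, y)" "a \<in> carrier B" "y \<in> carrier Y" "eta B a = \<phi> y"
      unfolding carD by auto
    show "(p (eta D d), q (eta D d)) \<in> carrier P"
    proof -
      have 1: "p (eta D d) = eta B a" using pD d dd by simp
      have 2: "q (eta D d) = {y}" using qD d dd by simp
      have "f (eta B a) = {eta B a}" using fB[OF dd(2)] .
      also have "\<dots> = {\<phi> y}" using dd(4) by simp
      also have "\<dots> = g {y}" using gYs[OF dd(3)] by simp
      finally have 3: "f (eta B a) = g {y}" .
      show ?thesis unfolding carP 1 2 using 3 ghe.hom_closed[OF dd(2)] etaYc[OF dd(3)] by simp
    qed
  qed
  have comm: "\<forall>M\<in>carrier (abel D). f (p M) = g (q M)"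
  proof
    fix M assume M: "M \<in> carrier (abel D)"
    obtain d where d: "d \<in> carrier D" "M = eta D d" using carAD[OF M] by blast
    have "(p M, q M) \<in> carrier P" using PhiD[OF d(1)] d(2) by simp
    then show "f (p M) = g (q M)" unfolding carP by simp
  qed
  have hom: "(\<lambda>M. (p M, q M)) \<in> hom (abel D) P"
  proof (rule homI)
    show "(p M, q M) \<in> carrier P" if M: "M \<in> carrier (abel D)" for M
    proof -
      obtain d where d: "d \<in> carrier D" "M = eta D d" using carAD[OF M] by blast
      show ?thesis using PhiD[OF d(1)] d(2) by simp
    qed
    show "(p (M \<otimes>\<^bsub>abel D\<^esub> N), q (M \<otimes>\<^bsub>abel D\<^esub> N)) = (p M, q M) \<otimes>\<^bsub>P\<^esub> (p N, q N)"
      if MN: "M \<in> carrier (abel D)" "N \<in> carrier (abel D)" for M N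
    proof -
      obtain d where d: "d \<in> carrier D" "M = eta D d" using carAD[OF MN(1)] by blast
      obtain e where e: "e \<in> carrier D" "N = eta D e" using carAD[OF MN(2)] by blast
      have dec: "d \<otimes>\<^bsub>D\<^esub> e \<in> carrier D"
        using d(1) e(1) by (rule monoid.m_closed[OF group.is_monoid[OF gD]])
      have m: "M \<otimes>\<^bsub>abel D\<^esub> N = eta D (d \<otimes>\<^bsub>D\<^esub> e)"
        unfolding d(2) e(2) using hom_mult[OF hetaD d(1) e(1)] by simp
      have fd: "fst d \<in> carrier B" "fst e \<in> carrier B" using d(1) e(1) ghf.hom_closed by auto
      have sd: "snd d \<in> carrier Y" "snd e \<in> carrier Y" using d(1) e(1) ghs.hom_closed by auto
      have "p (eta D (d \<otimes>\<^bsub>D\<^esub> e)) = eta B (fst (d \<otimes>\<^bsub>D\<^esub> e))" using pD[OF dec] .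
      also have "\<dots> = eta B (fst d \<otimes>\<^bsub>B\<^esub> fst e)" using ghf.hom_mult[OF d(1) e(1)] by simp
      also have "\<dots> = eta B (fst d) \<otimes>\<^bsub>abel B\<^esub> eta B (fst e)" using ghe.hom_mult[OF fd] .
      finally have P1: "p (eta D (d \<otimes>\<^bsub>D\<^esub> e)) = p M \<otimes>\<^bsub>abel B\<^esub> p N"
        unfolding d(2) e(2) pD[OF d(1)] pD[OF e(1)] .
      have sc: "snd d \<otimes>\<^bsub>Y\<^esub> snd e \<in> carrier Y"
        using sd by (rule monoid.m_closed[OF group.is_monoid[OF gY]])
      have "q (eta D (d \<otimes>\<^bsub>D\<^esub> e)) = {snd (d \<otimes>\<^bsub>D\<^esub> e)}" using qD[OF dec] .
      also have "\<dots> = {snd d \<otimes>\<^bsub>Y\<^esub> snd e}" using ghs.hom_mult[OF d(1) e(1)] by simp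
      also have "\<dots> = eta Y (snd d \<otimes>\<^bsub>Y\<^esub> snd e)" using etaY[OF sc] by simp
      also have "\<dots> = eta Y (snd d) \<otimes>\<^bsub>abel Y\<^esub> eta Y (snd e)" using hom_mult[OF eta_hom[OF gY] sd] .
      also have "\<dots> = {snd d} \<otimes>\<^bsub>abel Y\<^esub> {snd e}" using etaY[OF sd(1)] etaY[OF sd(2)] by simp
      finally have Q1: "q (eta D (d \<otimes>\<^bsub>D\<^esub> e)) = q M \<otimes>\<^bsub>abel Y\<^esub> q N"
        unfolding d(2) e(2) qD[OF d(1)] qD[OF e(1)] .
      show ?thesis unfolding m multP using P1 Q1 by simp
    qed
  qed
  have sfst: "fst ` carrier D = carrier B"
  proof
    show "fst ` carrier D \<subseteq> carrier B" unfolding carD by auto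
    show "carrier B \<subseteq> fst ` carrier D"
    proof
      fix b assume b: "b \<in> carrier B"
      then have "eta B b \<in> \<phi> ` carrier Y" using sphi ghe.hom_closed by simp
      then obtain y where "y \<in> carrier Y" "eta B b = \<phi> y" by auto
      then have "(b, y) \<in> carrier D" using b unfolding carD by simp
      then show "b \<in> fst ` carrier D" by force
    qed
  qed
  have dfst: "fst ` derived D (carrier D) = derived B (carrier B)"
    using ghf.derived_img[of "carrier D"] sfst by simp
  have dsnd: "snd ` derived D (carrier D) \<subseteq> {\<one>\<^bsub>Y\<^esub>}"
  proof -
    have "snd ` derived D (carrier D) = derived Y (snd ` carrier D)"
      using ghs.derived_img[of "carrier D"] by simp
    also have "\<dots> \<subseteq> derived Y (carrier Y)" by (rule group.mono_derived[OF gY]) (auto simp: carD)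
    also have "\<dots> = {\<one>\<^bsub>Y\<^esub>}" using comm_group.derived_eq_singleton[OF cY] by simp
    finally show ?thesis .
  qed
  have inj: "inj_on (\<lambda>M. (p M, q M)) (carrier (abel D))"
  proof (rule inj_onI)
    fix M N assume M: "M \<in> carrier (abel D)" and N: "N \<in> carrier (abel D)"
      and eq: "(p M, q M) = (p N, q N)"
    obtain d e where de: "d \<in> carrier D" "M = eta D d" "e \<in> carrier D" "N = eta D e"
      using carAD M N by metis
    have e1: "eta B (fst d) = eta B (fst e)" and e2: "snd d = snd e"
      using eq de pD qD by auto
    obtain k where k: "k \<in> derived B (carrier B)" "fst d = k \<otimes>\<^bsub>B\<^esub> fst e"
      using eta_eqD[OF gB _ _ e1] de ghf.hom_closed by blast
    obtain c where c: "c \<in> derived D (carrier D)" "fst c = k" using k(1) dfst by force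
    have c2: "snd c = \<one>\<^bsub>Y\<^esub>" using c dsnd by blast
    have "d = c \<otimes>\<^bsub>D\<^esub> e"
      using de c c2 k e2 unfolding multD by (simp add: ghs.hom_closed[OF de(3)] prod_eq_iff)
    then show "M = N" using eta_absorb[OF gD c(1) de(3)] de by simp
  qed
  have surj: "(\<lambda>M. (p M, q M)) ` carrier (abel D) = carrier P"
  proof
    show "(\<lambda>M. (p M, q M)) ` carrier (abel D) \<subseteq> carrier P" using hom unfolding hom_def by auto
    show "carrier P \<subseteq> (\<lambda>M. (p M, q M)) ` carrier (abel D)"
    proof
      fix z assume z: "z \<in> carrier P"
      then obtain K L where KL: "z = (K, L)" "K \<in> carrier (abel B)" "L \<in> carrier (abel Y)" "f K = g L"
        unfolding carP by auto
      obtain b y where bY: "b \<in> carrier B" "K = eta B b" "y \<in> carrier Y" "L = {y}"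
        using carA carAY KL by metis
      have "eta B b = \<phi> y" using KL(4) bY fB gYs by simp
      then have d: "(b, y) \<in> carrier D" using bY unfolding carD by simp
      have "eta D (b, y) \<in> carrier (abel D)" using d hetaD unfolding hom_def by auto
      moreover have "z = (p (eta D (b, y)), q (eta D (b, y)))" using d pD qD KL bY by simp
      ultimately show "z \<in> (\<lambda>M. (p M, q M)) ` carrier (abel D)" by blast
    qed
  qed
  have cone: "(\<lambda>M. (p M, q M)) ` abel_cone D PD = pb_cone (abel B) (abel_cone B PB) (abel Y) (abel_cone Y PY) f g"
  proof
    have PDc: "PD \<subseteq> carrier D" unfolding PD_def D_def pb_cone_def by auto
    show "(\<lambda>M. (p M, q M)) ` abel_cone D PD \<subseteq> pb_cone (abel B) (abel_cone B PB) (abel Y) (abel_cone Y PY) f g"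
    proof
      fix z assume "z \<in> (\<lambda>M. (p M, q M)) ` abel_cone D PD"
      then obtain d where d: "d \<in> PD" "z = (p (eta D d), q (eta D d))"
        unfolding abel_cone_def by auto
      have dc: "d \<in> carrier D" using d PDc by auto
      have "fst d \<in> PB" "snd d \<in> PY" using d(1) unfolding PD_def pb_cone_def by auto
      moreover have "z \<in> carrier P" using d PhiD dc by simp
      ultimately show "z \<in> pb_cone (abel B) (abel_cone B PB) (abel Y) (abel_cone Y PY) f g"
        using d dc pD qD PYc etaY
        unfolding pb_cone_def abel_cone_def P_def[symmetric] by (auto intro!: image_eqI)
    qed
    show "pb_cone (abel B) (abel_cone B PB) (abel Y) (abel_cone Y PY) f g \<subseteq> (\<lambda>M. (p M, q M)) ` abel_cone D PD"
    proof
      fix z assume z: "z \<in> pb_cone (abel B) (abel_cone B PB) (abel Y) (abel_cone Y PY) f g"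
      then obtain b y where bY: "z = (eta B b, eta Y y)" "b \<in> PB" "y \<in> PY" "f (eta B b) = g (eta Y y)"
        unfolding pb_cone_def abel_cone_def pb_group_def by auto
      have bc: "b \<in> carrier B" and yc: "y \<in> carrier Y" using bY PBc PYc by auto
      have "eta B b = \<phi> y" using bY(4) fB[OF bc] gYs[OF yc] etaY[OF yc] by simp
      then have d: "(b, y) \<in> PD" using bc yc bY unfolding PD_def pb_cone_def pb_group_def by simp
      then have "(b, y) \<in> carrier D" using PDc by auto
      then have "z = (p (eta D (b, y)), q (eta D (b, y)))" using pD qD bY etaY[OF yc] by simp
      then show "z \<in> (\<lambda>M. (p M, q M)) ` abel_cone D PD" using d unfolding abel_cone_def by blast
    qed
  qed
  show ?thesis
    unfolding is_pullback_square_def D_def[symmetric] PD_def[symmetric] p_def[symmetric]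
      q_def[symmetric] f_def[symmetric] g_def[symmetric] P_def[symmetric]
    using comm hom inj surj cone by (simp add: bij_betw_def)
qed

end
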